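(* For every integer $d\ge2$, $$I_{1-\frac1d}\Big(\frac{d+1}{2},\frac12\Big)\ge\frac{1}{8\sqrt{6\pi}},$$ where $I_x(a,b)=B_x(a,b)/B(a,b)$ is the regularized incomplete beta function, $B_x(a,b)=\int_0^xt^{a-1}(1-t)^{b-1}dt$ and $B(a,b)=B_1(a,b)$. *)

theory Defs
  imports "HOL-Analysis.Analysis"
begin

text \<open>Incomplete beta function B_x(a,b) = integral over [0,x] of t^(a-1) (1-t)^(b-1),
  as a Lebesgue interval integral (so the improper endpoint singularity at t = 1 is handled).\<close>
definition incBeta :: "real \<Rightarrow> real \<Rightarrow> real \<Rightarrow> real" where
  "incBeta x a b = (LBINT t=0..x. t powr (a - 1) * (1 - t) powr (b - 1))"

definition completeBeta :: "real \<Rightarrow> real \<Rightarrow> real" where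
  "completeBeta a b = incBeta 1 a b"

definition regIncBeta :: "real \<Rightarrow> real \<Rightarrow> real \<Rightarrow> real" where
  "regIncBeta x a b = incBeta x a b / completeBeta a b"

end

theory Submission
  imports Defs
begin

lemma g_int:
  fixes v :: real
  assumes "0 \<le> v" "v < 1"
  shows "set_integrable lborel {v<..<1} (\<lambda>t::real. (1-t) powr (-(1/2)))"
    "(LBINT t=v..1. (1-t) powr (-(1/2::real))) = 2 * sqrt (1 - v)"
proof -
  define F where "F = (\<lambda>t::real. -2 * sqrt (1 - t))"
  have D: "DERIV F x :> (1-x) powr (-(1/2::real))" if "x < 1" for x
  proof -
    have "DERIV F x :> -2 * (inverse (sqrt (1-x)) / 2 * (0 - 1))"
      unfolding F_def using that by (auto intro!: derivative_eq_intros)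
    moreover have "-2 * (inverse (sqrt (1-x)) / 2 * (0 - 1)) = (1-x) powr (-(1/2::real))"
      using that by (simp add: powr_minus powr_half_sqrt)
    ultimately show ?thesis by simp
  qed
  have C: "isCont (\<lambda>t::real. (1-t) powr (-(1/2::real))) x" if "x < 1" for x
    using that by (intro continuous_intros) auto
  have cF: "continuous_on UNIV F" unfolding F_def by (intro continuous_intros)
  have A: "((F \<circ> real_of_ereal) \<longlongrightarrow> F v) (at_right (ereal v))"
    unfolding ereal_tendsto_simps1
    by (rule tendsto_within_subset[OF continuous_on_tendsto_compose[OF cF tendsto_ident_at]]) auto
  have B: "((F \<circ> real_of_ereal) \<longlongrightarrow> F 1) (at_left (ereal 1))"
    unfolding ereal_tendsto_simps1
    by (rule tendsto_within_subset[OF continuous_on_tendsto_compose[OF cF tendsto_ident_at]]) auto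
  have Dx: "\<And>x. ereal v < ereal x \<Longrightarrow> ereal x < ereal 1 \<Longrightarrow> DERIV F x :> (1-x) powr (-(1/2::real))"
    using D by simp
  have Cx: "\<And>x. ereal v < ereal x \<Longrightarrow> ereal x < ereal 1 \<Longrightarrow> isCont (\<lambda>t::real. (1-t) powr (-(1/2::real))) x"
    using C by simp
  have N: "AE x in lborel. ereal v < ereal x \<longrightarrow> ereal x < ereal 1 \<longrightarrow> 0 \<le> (1-x) powr (-(1/2::real))"
    by simp
  have lt: "ereal v < ereal 1" using assms by simp
  note R = interval_integral_FTC_nonneg[OF lt Dx Cx N A B]
  show "set_integrable lborel {v<..<1} (\<lambda>t::real. (1-t) powr (-(1/2)))"
    using R(1) by simp
  have "F 1 - F v = 2 * sqrt (1 - v)" by (simp add: F_def)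
  then show "(LBINT t=v..1. (1-t) powr (-(1/2::real))) = 2 * sqrt (1 - v)"
    using R(2) by (simp add: one_ereal_def)
qed

lemma exp_bound: "1/6 \<le> exp (-(3/2::real))"
proof -
  have "exp (3/2::real) ^ 2 = exp 3" by (simp add: exp_double[symmetric])
  also have "exp (3::real) = exp 1 ^ 3" by (simp add: exp_of_nat_mult[symmetric])
  also have "\<dots> \<le> 3 ^ 3" using exp_le by (intro power_mono) auto
  finally have "exp (3/2::real) ^ 2 \<le> 6 ^ 2" by simp
  hence "exp (3/2::real) \<le> 6" by (rule power2_le_imp_le) auto
  thus ?thesis by (simp add: exp_minus field_simps)
qed

lemma upow_bound:
  fixes x :: real assumes x2: "x \<ge> 2"
  shows "(1 - 3/(2*x)) powr ((x+1)/2 - 1) \<ge> 1/6"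
proof -
  define u where "u = 1 - 3/(2*x)"
  have u0: "u \<ge> 1/4" using x2 by (simp add: u_def field_simps)
  have "ln (1/u) \<le> 1/u - 1" using u0 by (intro ln_le_minus_one) auto
  hence lnu: "ln u \<ge> 1 - 1/u" using u0 by (simp add: ln_div)
  have "1 - 1/u = -3/(2*x-3)" using x2 by (simp add: u_def field_simps)
  hence "((x+1)/2 - 1) * ln u \<ge> ((x+1)/2 - 1) * (-3/(2*x-3))"
    using lnu x2 by (intro mult_left_mono) auto
  moreover have "((x+1)/2 - 1) * (-3/(2*x-3)) \<ge> -(3/2)"
    using x2 by (simp add: field_simps)
  ultimately have "((x+1)/2 - 1) * ln u \<ge> -(3/2)" by linarith
  hence "exp (((x+1)/2 - 1) * ln u) \<ge> exp (-(3/2))" by simp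
  moreover have "u powr ((x+1)/2 - 1) = exp (((x+1)/2 - 1) * ln u)"
    using u0 by (simp add: powr_def mult.commute)
  ultimately show ?thesis using exp_bound unfolding u_def by linarith
qed

lemma final_arith:
  fixes nn tt s :: real
  assumes s: "s > 0" and nn: "nn \<ge> 1/(15 * s)" and tt: "0 \<le> tt" "tt \<le> 2/s"
  shows "nn / (nn + tt) \<ge> 1 / (8 * sqrt (6 * pi))"
proof -
  define r where "r = 1 / (8 * sqrt (6 * pi))"
  have "sqrt 18 \<le> sqrt (6*pi)" using pi_gt3 by (intro real_sqrt_le_mono) auto
  moreover have "4.2 \<le> sqrt (18::real)" by (rule real_le_rsqrt) (simp add: power2_eq_square)
  ultimately have "8 * 4.2 \<le> 8 * sqrt (6*pi)" by linarith
  hence r1: "r \<le> 1 / (8*4.2)" unfolding r_def by (rule divide_left_mono) auto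
  have r2: "0 < r" unfolding r_def by simp
  note r = r1 r2
  have nnpos: "nn > 0" using nn s by (smt (verit) divide_pos_pos)
  have "r * (nn + tt) \<le> nn"
  proof -
    have "r * tt \<le> r * (2/s)" using r tt by (intro mult_left_mono) auto
    also have "\<dots> \<le> (1 - r) * (1/(15 * s))" using r s by (simp add: field_simps)
    also have "\<dots> \<le> (1 - r) * nn" using r nn by (intro mult_left_mono) auto
    finally show ?thesis by (simp add: algebra_simps)
  qed
  thus ?thesis using nnpos tt unfolding r_def[symmetric] by (simp add: field_simps)
qed


theorem mainTheorem7:
  fixes d :: int
  assumes "d \<ge> 2"
  shows "regIncBeta (1 - 1 / real_of_int d) ((real_of_int d + 1) / 2) (1 / 2)
           \<ge> 1 / (8 * sqrt (6 * pi))"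
proof -
  define x where "x = real_of_int d"
  have x2: "x \<ge> 2" using assms by (simp add: x_def)
  define p where "p = (x+1)/2 - 1"
  have p0: "p \<ge> 0" using x2 by (simp add: p_def)
  define f where "f = (\<lambda>t::real. t powr p * (1-t) powr (1/2 - 1))"
  define g where "g = (\<lambda>t::real. (1-t) powr (-(1/2)))"
  define v where "v = 1 - 1/x"
  define u where "u = 1 - 3/(2*x)"
  have uv: "0 \<le> u" "u < v" "v < 1" using x2 by (auto simp: u_def v_def field_simps)
  have fmeas: "f \<in> borel_measurable lborel" unfolding f_def by measurable
  have fg: "0 \<le> f t \<and> f t \<le> g t" if "0 < t" "t < 1" for t
  proof -
    have "t powr p \<le> 1 powr p" using that p0 by (intro powr_mono2) auto
    hence "t powr p * (1-t) powr (-(1/2)) \<le> 1 * (1-t) powr (-(1/2))"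
      by (intro mult_right_mono) auto
    thus ?thesis by (simp add: f_def g_def)
  qed
  have gint: "set_integrable lborel {0<..<1} g" unfolding g_def using g_int(1)[of 0] by simp
  have fint: "set_integrable lborel {0<..<1} f"
  proof (rule set_integrable_bound[OF gint])
    show "set_borel_measurable lborel {0<..<1} f" unfolding set_borel_measurable_def
      using fmeas by measurable
    show "AE x in lborel. x \<in> {0<..<1} \<longrightarrow> norm (f x) \<le> norm (g x)"
      using fg by (auto intro!: AE_I2) (smt (verit, best))
  qed
  have fsub: "interval_lebesgue_integrable lborel (ereal a) (ereal b) f" if "0 \<le> a" "a \<le> b" "b \<le> 1" for a b
    unfolding interval_lebesgue_integrable_def using that
    by (auto intro!: set_integrable_subset[OF fint])
  define N where "N = (LBINT t=0..v. f t)"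
  define T where "T = (LBINT t=v..1. f t)"
  have sum1: "(LBINT t=0..v. f t) + (LBINT t=v..1. f t) = (LBINT t=0..1. f t)"
    using fsub[of 0 1] uv by (intro interval_integral_sum) (simp add: zero_ereal_def one_ereal_def)
  have sum2: "(LBINT t=0..u. f t) + (LBINT t=u..v. f t) = (LBINT t=0..v. f t)"
    using fsub[of 0 v] uv by (intro interval_integral_sum) (simp add: zero_ereal_def)
  have T0: "0 \<le> T"
  proof -
    have "(LBINT t:{v<..<1}. (0::real)) \<le> (LBINT t:{v<..<1}. f t)"
      using fsub[of v 1] uv fg interval_integral_const(1)[of v 1 0] by (intro set_integral_mono) (auto simp: interval_lebesgue_integrable_def)
    thus ?thesis using uv by (simp add: T_def interval_lebesgue_integral_le_eq one_ereal_def)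
  qed
  have T1: "T \<le> 2 / sqrt x"
  proof -
    have "(LBINT t:{v<..<1}. f t) \<le> (LBINT t:{v<..<1}. g t)"
      using fsub[of v 1] uv fg g_int(1)[of v] by (intro set_integral_mono) (auto simp: interval_lebesgue_integrable_def g_def)
    also have "\<dots> = 2 * sqrt (1 - v)" using g_int(2)[of v] uv
      by (simp add: g_def interval_lebesgue_integral_le_eq one_ereal_def)
    also have "\<dots> = 2 / sqrt x" using x2 by (simp add: v_def real_sqrt_divide)
    finally show ?thesis using uv by (simp add: T_def interval_lebesgue_integral_le_eq one_ereal_def)
  qed
  have N0: "0 \<le> (LBINT t=0..u. f t)"
  proof -
    have "(LBINT t:{0<..<u}. (0::real)) \<le> (LBINT t:{0<..<u}. f t)"
      using fsub[of 0 u] uv fg interval_integral_const(1)[of 0 u 0] by (intro set_integral_mono) (auto simp: interval_lebesgue_integrable_def)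
    thus ?thesis using uv by (simp add: interval_lebesgue_integral_le_eq zero_ereal_def)
  qed
  define c where "c = (1/6) * (1-u) powr (-(1/2))"
  have cle: "c \<le> f t" if "u < t" "t < v" for t
  proof -
    have "1/6 \<le> u powr p" using upow_bound[OF x2] by (simp add: u_def p_def)
    also have "u powr p \<le> t powr p" using that uv p0 by (intro powr_mono2) auto
    finally have a: "1/6 \<le> t powr p" .
    have b: "(1-u) powr (-(1/2)) \<le> (1-t) powr (-(1/2))" using that uv by (intro powr_mono2') auto
    have "c \<le> t powr p * (1-t) powr (-(1/2))" unfolding c_def
      using a b by (intro mult_mono) auto
    thus ?thesis by (simp add: f_def)
  qed
  have N1: "(v - u) * c \<le> (LBINT t=u..v. f t)"
  proof -
    have "(LBINT t:{u<..<v}. c) \<le> (LBINT t:{u<..<v}. f t)"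
      using fsub[of u v] uv cle interval_integral_const(1)[of u v c]
      by (intro set_integral_mono) (auto simp: interval_lebesgue_integrable_def)
    moreover have "(LBINT t:{u<..<v}. c) = c * (v - u)"
    proof -
      have "(LBINT t=u..v. c) = c * (v - u)" by (rule interval_integral_const(2))
      thus ?thesis using uv by (subst (asm) interval_lebesgue_integral_le_eq) auto
    qed
    ultimately show ?thesis using uv by (simp add: interval_lebesgue_integral_le_eq mult.commute)
  qed
  define s where "s = sqrt x"
  have s0: "s > 0" using x2 by (simp add: s_def)
  have xs: "x = s^2" using x2 by (simp add: s_def)
  have "sqrt (1 - u) \<le> sqrt ((5/4)^2 / x)" using x2 by (intro real_sqrt_le_mono) (simp add: u_def field_simps)
  also have "\<dots> = (5/4) / s" by (simp add: s_def real_sqrt_divide)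
  finally have su: "sqrt (1-u) \<le> (5/4)/s" .
  have su0: "sqrt (1-u) > 0" using uv by simp
  have "(1-u) powr (-(1/2)) = inverse ((1-u) powr (1/2))" by (rule powr_minus)
  also have "\<dots> = inverse (sqrt (1-u))" using uv by (simp only: powr_half_sqrt)
  also have "\<dots> \<ge> inverse ((5/4)/s)" using su su0 by (intro le_imp_inverse_le) auto
  finally have cb: "(1-u) powr (-(1/2)) \<ge> (4/5) * s" by (simp add: field_simps)
  have "(v - u) * c \<ge> 1/(15 * s)"
  proof -
    have "v - u = 1/(2* s^2)" using xs s0 by (simp add: u_def v_def field_simps)
    moreover have "c \<ge> (1/6) * ((4/5) * s)" using cb by (simp add: c_def)
    ultimately have "(v - u) * c \<ge> 1/(2* s^2) * ((1/6) * ((4/5) * s))"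
      using s0 by (metis mult_left_mono divide_nonneg_nonneg zero_le_numeral zero_le_power2 mult_nonneg_nonneg zero_le_one)
    moreover have "1/(2* s^2) * ((1/6) * ((4/5) * s)) = 1/(15 * s)" using s0
      by (simp add: field_simps power2_eq_square)
    ultimately show ?thesis by simp
  qed
  hence Nb: "N \<ge> 1/(15 * s)" using N0 N1 sum2 by (simp add: N_def)
  have main: "N / (N + T) \<ge> 1 / (8 * sqrt (6 * pi))"
    using final_arith[OF s0 Nb T0] T1 by (simp add: s_def)
  have fe: "(\<lambda>t. t powr ((real_of_int d + 1) / 2 - 1) * (1 - t) powr (1 / 2 - 1)) = f"
    by (simp add: f_def p_def x_def)
  have ve: "1 - 1 / real_of_int d = v" by (simp add: v_def x_def)
  have s1: "(LBINT t=ereal 0..ereal v. f t) + (LBINT t=ereal v..ereal 1. f t) = (LBINT t=ereal 0..ereal 1. f t)"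
    using sum1 by (simp add: zero_ereal_def one_ereal_def)
  have eq: "regIncBeta (1 - 1 / real_of_int d) ((real_of_int d + 1) / 2) (1 / 2) = N / (N + T)"
  proof -
    have "regIncBeta (1 - 1 / real_of_int d) ((real_of_int d + 1) / 2) (1 / 2) =
        (LBINT t=ereal 0..ereal v. f t) / (LBINT t=ereal 0..ereal 1. f t)"
      unfolding regIncBeta_def completeBeta_def incBeta_def fe ve by (simp add: zero_ereal_def)
    also have "\<dots> = N / (N + T)" unfolding s1[symmetric] N_def T_def
      by (simp add: zero_ereal_def one_ereal_def)
    finally show ?thesis .
  qed
  show ?thesis using main eq by simp
qed

end
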